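(* Let $G=(V,E)$ be a graph and $\mathbb{F}$ a field. Suppose there exist a proper coloring $c:V\to[m]$ of $G$ and vectors $u_1,\dots,u_m\in\mathbb{F}^t$ such that for every $v\in V$ the vectors $\{u_{c(v')}: v'\in\{v\}\cup N(v)\}$ (indexed by the colors appearing in the closed neighborhood of $v$) are linearly independent over $\mathbb{F}$. Then $\mathrm{minrk}_{\mathbb{F}}(\overline{G})\le t$.
   Context: $\overline{G}$ denotes the complement of $G$, and $N(v)$ the neighborhood of $v$. For a graph $H$ on vertex set $[n]$, a matrix $M\in\mathbb{F}^{n\times n}$ represents $H$ if $M_{i,i}\ne0$ for all $i$ and $M_{i,j}=0$ for all distinct non-adjacent $i,j$. The minrank $\mathrm{minrk}_{\mathbb{F}}(H)$ is the minimum rank over $\mathbb{F}$ of a matrix representing $H$. *)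

theory Defs
  imports "Jordan_Normal_Form.DL_Rank"
begin

definition simple_graph :: "nat \<Rightarrow> (nat \<Rightarrow> nat \<Rightarrow> bool) \<Rightarrow> bool" where
  "simple_graph n E \<longleftrightarrow> (\<forall>i<n. \<forall>j<n. E i j \<longleftrightarrow> E j i) \<and> (\<forall>i<n. \<not> E i i)"

definition graph_compl :: "(nat \<Rightarrow> nat \<Rightarrow> bool) \<Rightarrow> nat \<Rightarrow> nat \<Rightarrow> bool" where
  "graph_compl E i j \<longleftrightarrow> i \<noteq> j \<and> \<not> E i j"

definition nbhd :: "nat \<Rightarrow> (nat \<Rightarrow> nat \<Rightarrow> bool) \<Rightarrow> nat \<Rightarrow> nat set" where
  "nbhd n E v = {w. w < n \<and> E v w}"

definition represents :: "nat \<Rightarrow> (nat \<Rightarrow> nat \<Rightarrow> bool) \<Rightarrow> 'f::field mat \<Rightarrow> bool" where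
  "represents n H M \<longleftrightarrow> M \<in> carrier_mat n n \<and> (\<forall>i<n. M $$ (i,i) \<noteq> 0)
     \<and> (\<forall>i<n. \<forall>j<n. i \<noteq> j \<and> \<not> H i j \<longrightarrow> M $$ (i,j) = 0)"

definition minrk :: "'f::field itself \<Rightarrow> nat \<Rightarrow> (nat \<Rightarrow> nat \<Rightarrow> bool) \<Rightarrow> nat" where
  "minrk F n H = (LEAST r. \<exists>M::'f mat. represents n H M \<and> vec_space.rank n M = r)"

definition lin_indep_family :: "nat \<Rightarrow> (nat \<Rightarrow> 'f::field vec) \<Rightarrow> nat set \<Rightarrow> bool" where
  "lin_indep_family t u C \<longleftrightarrow>
     (\<forall>a::nat \<Rightarrow> 'f. (\<forall>k<t. (\<Sum>i\<in>C. a i * (u i $ k)) = 0) \<longrightarrow> (\<forall>i\<in>C. a i = 0))"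

end

theory Submission
  imports Defs
begin

definition ipr :: "nat \<Rightarrow> (nat \<Rightarrow> 'f::field) \<Rightarrow> (nat \<Rightarrow> 'f) \<Rightarrow> 'f" where
  "ipr t x w = (\<Sum>k<t. x k * w k)"

definition indepw :: "nat \<Rightarrow> (nat \<Rightarrow> nat \<Rightarrow> 'f::field) \<Rightarrow> nat set \<Rightarrow> bool" where
  "indepw t w C \<longleftrightarrow> (\<forall>a. (\<forall>k<t. (\<Sum>i\<in>C. a i * w i k) = 0) \<longrightarrow> (\<forall>i\<in>C. a i = 0))"

lemma indepw_subset:
  assumes "indepw t w (insert j C)" "j \<notin> C" "finite C"
  shows "indepw t w C"
  unfolding indepw_def
proof (intro allI impI ballI)
  fix a i assume h: "\<forall>k<t. (\<Sum>i\<in>C. a i * w i k) = 0" and i: "i \<in> C"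
  let ?a = "a(j := 0)"
  have "\<forall>k<t. (\<Sum>i\<in>insert j C. ?a i * w i k) = 0"
  proof (intro allI impI)
    fix k assume "k < t"
    have "(\<Sum>i\<in>insert j C. ?a i * w i k) = (\<Sum>i\<in>C. ?a i * w i k)"
      using assms by (simp add: sum.insert)
    also have "\<dots> = (\<Sum>i\<in>C. a i * w i k)"
      by (rule sum.cong) (use assms in auto)
    finally show "(\<Sum>i\<in>insert j C. ?a i * w i k) = 0" using h \<open>k<t\<close> by simp
  qed
  then have "?a i = 0" using assms(1) i unfolding indepw_def by blast
  moreover have "i \<noteq> j" using i assms(2) by auto
  ultimately show "a i = 0" by simp
qed

lemma ipr_add: "ipr t (\<lambda>s. x s + l * z s) w = ipr t x w + l * ipr t z w"
  unfolding ipr_def by (simp add: algebra_simps sum.distrib sum_distrib_left)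

lemma dual_exists:
  assumes "finite C" "indepw t w C"
  shows "\<exists>x. \<forall>i\<in>C. ipr t x (w i) = b i"
  using assms
proof (induction C arbitrary: b rule: finite_induct)
  case empty then show ?case by simp
next
  case (insert j C)
  have indC: "indepw t w C" using indepw_subset insert by blast
  have "\<forall>i. \<exists>x. \<forall>l\<in>C. ipr t x (w l) = (if l = i then 1 else 0)"
  proof
    fix i show "\<exists>x. \<forall>l\<in>C. ipr t x (w l) = (if l = i then 1 else 0)"
      using insert.IH[OF indC, of "\<lambda>l. if l = i then 1 else 0"] by simp
  qed
  then obtain y where y: "\<And>i l. l \<in> C \<Longrightarrow> ipr t (y i) (w l) = (if l = i then 1 else 0)"
    by metis
  obtain x0 where x0: "\<And>l. l \<in> C \<Longrightarrow> ipr t x0 (w l) = b l"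
    using insert.IH[OF indC] by blast
  define z where "z k = (\<lambda>s. (if s = k then 1 else 0) - (\<Sum>i\<in>C. w i k * y i s))" for k
  have zC: "ipr t (z k) (w l) = 0" if "k < t" "l \<in> C" for k l
  proof -
    have "ipr t (z k) (w l) = (\<Sum>s<t. (if s = k then 1 else 0) * w l s) - (\<Sum>s<t. (\<Sum>i\<in>C. w i k * y i s) * w l s)"
      unfolding ipr_def z_def by (simp add: algebra_simps sum_subtractf)
    also have "(\<Sum>s<t. (if s = k then 1 else 0) * w l s) = w l k"
      using that by (subst sum.cong[OF refl, of _ _ "\<lambda>s. if s = k then w l s else 0"]) auto
    also have "(\<Sum>s<t. (\<Sum>i\<in>C. w i k * y i s) * w l s) = (\<Sum>i\<in>C. w i k * ipr t (y i) (w l))"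
      unfolding ipr_def by (simp add: sum_distrib_left sum_distrib_right sum.swap[of _ C] algebra_simps)
    also have "\<dots> = (\<Sum>i\<in>C. if i = l then w i k else 0)"
      by (rule sum.cong) (auto simp: y that)
    also have "\<dots> = w l k" using that insert by (simp add: sum.delta')
    finally show ?thesis by simp
  qed
  have "\<exists>k<t. ipr t (z k) (w j) \<noteq> 0"
  proof (rule ccontr)
    assume "\<not> ?thesis"
    then have h0: "\<And>k. k < t \<Longrightarrow> ipr t (z k) (w j) = 0" by blast
    define a where "a i = (if i = j then -1 else ipr t (y i) (w j))" for i
    have "\<forall>k<t. (\<Sum>i\<in>insert j C. a i * w i k) = 0"
    proof (intro allI impI)
      fix k assume k: "k < t"
      have e: "ipr t (z k) (w j) = w j k - (\<Sum>i\<in>C. w i k * ipr t (y i) (w j))"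
      proof -
        have "ipr t (z k) (w j) = (\<Sum>s<t. (if s = k then 1 else 0) * w j s) - (\<Sum>s<t. (\<Sum>i\<in>C. w i k * y i s) * w j s)"
          unfolding ipr_def z_def by (simp add: algebra_simps sum_subtractf)
        also have "(\<Sum>s<t. (if s = k then 1 else 0) * w j s) = w j k"
          using k by (subst sum.cong[OF refl, of _ _ "\<lambda>s. if s = k then w j s else 0"]) auto
        also have "(\<Sum>s<t. (\<Sum>i\<in>C. w i k * y i s) * w j s) = (\<Sum>i\<in>C. w i k * ipr t (y i) (w j))"
          unfolding ipr_def by (simp add: sum_distrib_left sum_distrib_right sum.swap[of _ C] algebra_simps)
        finally show ?thesis .
      qed
      have "(\<Sum>i\<in>insert j C. a i * w i k) = - w j k + (\<Sum>i\<in>C. a i * w i k)"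
        using insert by (simp add: a_def)
      also have "(\<Sum>i\<in>C. a i * w i k) = (\<Sum>i\<in>C. w i k * ipr t (y i) (w j))"
        by (rule sum.cong) (use insert in \<open>auto simp: a_def\<close>)
      finally show "(\<Sum>i\<in>insert j C. a i * w i k) = 0" using e h0[OF k] by simp
    qed
    then have "a j = 0" using insert.prems unfolding indepw_def by blast
    then show False by (simp add: a_def)
  qed
  then obtain k where k: "k < t" "ipr t (z k) (w j) \<noteq> 0" by blast
  define l where "l = (b j - ipr t x0 (w j)) / ipr t (z k) (w j)"
  define x where "x = (\<lambda>s. x0 s + l * z k s)"
  have "\<forall>i\<in>insert j C. ipr t x (w i) = b i"
  proof
    fix i assume "i \<in> insert j C"
    then consider "i = j" | "i \<in> C" by blast
    then show "ipr t x (w i) = b i"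
    proof cases
      case 1 then show ?thesis using k unfolding x_def ipr_add l_def by simp
    next
      case 2 then show ?thesis unfolding x_def ipr_add using zC[OF k(1) 2] x0 by simp
    qed
  qed
  then show ?case by blast
qed


lemma rank_sum_prod:
  fixes X :: "nat \<Rightarrow> nat \<Rightarrow> 'f::field" and Y :: "nat \<Rightarrow> nat \<Rightarrow> 'f"
  shows "vec_space.rank n (mat n n (\<lambda>(v,w). \<Sum>k<s. X v k * Y k w)) \<le> s"
proof (induction s)
  case 0
  have "mat n n (\<lambda>(v,w). \<Sum>k<0. X v k * Y k w) = (0\<^sub>m n n :: 'f mat)"
    by (rule eq_matI) auto
  then show ?case using vec_space.rank_0I[of n n] by (metis le_refl)
next
  case (Suc s)
  let ?A = "mat n n (\<lambda>(v,w). \<Sum>k<s. X v k * Y k w)"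
  let ?B = "mat n n (\<lambda>(v,w). X v s * Y s w)"
  have eq: "mat n n (\<lambda>(v,w). \<Sum>k<Suc s. X v k * Y k w) = ?A + ?B"
    by (rule eq_matI) auto
  have "vec_space.rank n (?A + ?B) \<le> vec_space.rank n ?A + vec_space.rank n ?B"
    by (rule vec_space.rank_subadditive) auto
  moreover have "vec_space.rank n ?B \<le> 1"
    by (rule vec_space.rank_le_1_product_entries[of _ n n "\<lambda>r. X r s" "\<lambda>c. Y s c"]) auto
  ultimately show ?case using eq Suc.IH by simp
qed

theorem mainTheorem9:
  fixes n m t :: nat and E :: "nat \<Rightarrow> nat \<Rightarrow> bool"
    and c :: "nat \<Rightarrow> nat" and u :: "nat \<Rightarrow> 'f::field vec"
  assumes "simple_graph n E"
    and "\<forall>v<n. c v < m"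
    and "\<forall>v<n. \<forall>w<n. E v w \<longrightarrow> c v \<noteq> c w"
    and "\<forall>i<m. u i \<in> carrier_vec t"
    and "\<forall>v<n. lin_indep_family t u (c ` ({v} \<union> nbhd n E v))"
  shows "minrk TYPE('f) n (graph_compl E) \<le> t"
proof -
  define w where "w i = (\<lambda>k. u i $ k)" for i
  have "\<forall>v. \<exists>x. v < n \<longrightarrow> (\<forall>i\<in>c ` ({v} \<union> nbhd n E v). ipr t x (w i) = (if i = c v then 1 else 0))"
  proof (intro allI impI)
    fix v
    show "\<exists>x. v < n \<longrightarrow> (\<forall>i\<in>c ` ({v} \<union> nbhd n E v). ipr t x (w i) = (if i = c v then 1 else 0))"
    proof (cases "v < n")
      case True
      have fin: "finite (c ` ({v} \<union> nbhd n E v))" unfolding nbhd_def by auto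
      have "indepw t w (c ` ({v} \<union> nbhd n E v))"
        using assms(5) True unfolding indepw_def lin_indep_family_def w_def by blast
      from dual_exists[OF fin this, of "\<lambda>i. if i = c v then 1 else 0"] show ?thesis by blast
    qed simp
  qed
  then obtain X where X: "\<And>v i. v < n \<Longrightarrow> i \<in> c ` ({v} \<union> nbhd n E v) \<Longrightarrow> ipr t (X v) (w i) = (if i = c v then 1 else 0)"
    by metis
  define M :: "'f mat" where "M = mat n n (\<lambda>(v,j). \<Sum>k<t. X v k * w (c j) k)"
  have rep: "represents n (graph_compl E) M"
    unfolding represents_def
  proof (intro conjI allI impI)
    show "M \<in> carrier_mat n n" unfolding M_def by simp
  next
    fix i assume i: "i < n"
    have "ipr t (X i) (w (c i)) = 1" using X[OF i, of "c i"] by simp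
    then show "M $$ (i, i) \<noteq> 0" using i unfolding M_def ipr_def by simp
  next
    fix i j assume i: "i < n" and j: "j < n" and h: "i \<noteq> j \<and> \<not> graph_compl E i j"
    then have e: "E i j" unfolding graph_compl_def by auto
    then have "c j \<in> c ` ({i} \<union> nbhd n E i)" using j unfolding nbhd_def by auto
    moreover have "c j \<noteq> c i" using assms(3) i j e by metis
    ultimately have "ipr t (X i) (w (c j)) = 0" using X[OF i] by simp
    then show "M $$ (i, j) = 0" using i j unfolding M_def ipr_def by simp
  qed
  have "vec_space.rank n M \<le> t"
    unfolding M_def using rank_sum_prod[where X=X and Y="\<lambda>k j. w (c j) k" and n=n and s=t] by simp
  moreover have "minrk TYPE('f) n (graph_compl E) \<le> vec_space.rank n M"
    unfolding minrk_def by (rule Least_le) (use rep in blast)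
  ultimately show ?thesis by simp
qed

end
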